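(* Let $\nu$ be an ergodic $S$-invariant Borel probability measure on $X_\eta$ with $\nu(Y)=1$. Then there exists an ergodic $S\times S$-invariant probability measure $\widetilde\rho$ on $X_\eta\times\{0,1\}^{\mathbb Z}$ whose projection onto the first coordinate is the Mirsky measure $\nu_{\mathscr B}$ and such that $M_*(\widetilde\rho)=\nu$.
   Context: Let $S$ be the shift on $\{0,1\}^{\mathbb Z}$, $(Sx)(n)=x(n+1)$. Let $\mathscr{B}=\{b_1,b_2,\dots\}\subset\{2,3,\dots\}$ with $\gcd(b_i,b_j)=1$ for $i\ne j$ and $\sum_i1/b_i<\infty$. Define $\eta(n)=1$ iff $b_i\nmid n$ for all $i$ (else $0$), and let $X_\eta$ be the set of $y\in\{0,1\}^{\mathbb Z}$ all of whose finite blocks occur in $\eta$; equivalently $y\in X_\eta$ iff $|\mathrm{supp}(y)\bmod b_i|<b_i$ for all $i$, where $\mathrm{supp}(y)=\{n:y(n)=1\}$. Let $Y=\{x\in X_\eta: |\mathrm{supp}(x)\bmod b_i|=b_i-1\ \text{for all } i\ge1\}$. Let $\Omega=\prod_i\mathbb Z/b_i\mathbb Z$ with Haar measure $\mathbb P$ and $\varphi(\omega)(n)=1$ iff $\omega(i)+n\not\equiv 0\pmod{b_i}$ for all $i$; the Mirsky measure is $\nu_{\mathscr B}=\varphi_*\mathbb P$. The map $M:X_\eta\times\{0,1\}^{\mathbb Z}\to X_\eta$ is $M(x,u)(n)=x(n)u(n)$. *)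

theory Defs
  imports "HOL-Probability.Probability"
begin

text \<open>Configurations in {0,1}^Z are modelled as functions int => bool
  (True = 1), with the product sigma-algebra (= Borel sigma-algebra of the
  product topology, since the product is countable and the factors finite).\<close>

definition cfg_space :: "(int \<Rightarrow> bool) measure" where
  "cfg_space = PiM UNIV (\<lambda>_. count_space UNIV)"

definition shift :: "(int \<Rightarrow> bool) \<Rightarrow> (int \<Rightarrow> bool)" where
  "shift x = (\<lambda>n. x (n + 1))"

definition supp :: "(int \<Rightarrow> bool) \<Rightarrow> int set" where
  "supp y = {n. y n}"

text \<open>The characteristic function of the B-free integers; B = {b i | i}.\<close>
definition eta :: "(nat \<Rightarrow> nat) \<Rightarrow> int \<Rightarrow> bool" where
  "eta b n = (\<forall>i. \<not> int (b i) dvd n)"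

definition X_eta :: "(nat \<Rightarrow> nat) \<Rightarrow> (int \<Rightarrow> bool) set" where
  "X_eta b = {y. \<forall>(a::int) (L::nat). \<exists>t::int. \<forall>j<L. y (a + int j) = eta b (t + int j)}"

definition Y_set :: "(nat \<Rightarrow> nat) \<Rightarrow> (int \<Rightarrow> bool) set" where
  "Y_set b = {x \<in> X_eta b. \<forall>i. card ((\<lambda>n. n mod int (b i)) ` supp x) = b i - 1}"

text \<open>Haar measure on Omega = prod_i Z/b_iZ: the product of the uniform
  probability measures on the residues {0..<b i}.\<close>
definition haar_Omega :: "(nat \<Rightarrow> nat) \<Rightarrow> (nat \<Rightarrow> int) measure" where
  "haar_Omega b = PiM UNIV (\<lambda>i. measure_pmf (pmf_of_set {0..<int (b i)}))"

definition phi :: "(nat \<Rightarrow> nat) \<Rightarrow> (nat \<Rightarrow> int) \<Rightarrow> (int \<Rightarrow> bool)" where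
  "phi b \<omega> = (\<lambda>n. \<forall>i. (\<omega> i + n) mod int (b i) \<noteq> 0)"

definition mirsky :: "(nat \<Rightarrow> nat) \<Rightarrow> (int \<Rightarrow> bool) measure" where
  "mirsky b = distr (haar_Omega b) cfg_space (phi b)"

definition Mmap :: "(int \<Rightarrow> bool) \<times> (int \<Rightarrow> bool) \<Rightarrow> (int \<Rightarrow> bool)" where
  "Mmap p = (\<lambda>n. fst p n \<and> snd p n)"

definition invariant_meas :: "'a measure \<Rightarrow> ('a \<Rightarrow> 'a) \<Rightarrow> bool" where
  "invariant_meas m T \<longleftrightarrow> T \<in> measurable m m \<and> distr m m T = m"

definition ergodic_meas :: "'a measure \<Rightarrow> ('a \<Rightarrow> 'a) \<Rightarrow> bool" where
  "ergodic_meas m T \<longleftrightarrow> invariant_meas m T \<and>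
     (\<forall>A \<in> sets m. T -` A \<inter> space m = A \<longrightarrow> emeasure m A = 0 \<or> emeasure m A = 1)"

end

theory Submission
  imports Defs "HOL-Number_Theory.Cong"
begin


lemma b_inj:
  assumes b_ge: "\<And>i. b i \<ge> (2::nat)" and b_coprime: "\<And>i j. i \<noteq> j \<Longrightarrow> coprime (b i) (b j)"
  shows "inj b"
proof (rule injI, rule ccontr)
  fix i j assume "b i = b j" "i \<noteq> j"
  then have "coprime (b i) (b i)" using b_coprime by metis
  then have "b i = 1" by simp
  with b_ge[of i] show False by simp
qed

lemma finite_b_le:
  assumes "inj (b::nat\<Rightarrow>nat)" shows "finite {i. b i \<le> N}"
proof -
  have "{i. b i \<le> N} = b -` {..N}" by auto
  then show ?thesis using finite_vimageI[OF _ assms, of "{..N}"] by simp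
qed

lemma tail_small:
  assumes "inj (b::nat\<Rightarrow>nat)" "summable (\<lambda>i. 1 / real (b i))" "(e::real) > 0"
  shows "\<exists>N. \<forall>F. finite F \<longrightarrow> (\<forall>i\<in>F. b i > N) \<longrightarrow> (\<Sum>i\<in>F. 1 / real (b i)) < e"
proof -
  let ?f = "\<lambda>i. 1 / real (b i)"
  obtain K where K: "norm (\<Sum>i. ?f (i + K)) < e"
    using suminf_exist_split[OF assms(3) assms(2)] by blast
  define N where "N = Max (b ` {..<K})"
  have sK: "summable (\<lambda>i. ?f (i + K))" using assms(2) summable_iff_shift[of ?f K] by simp
  show ?thesis
  proof (intro exI allI impI)
    fix F assume F: "finite F" "\<forall>i\<in>F. N < b i"
    have FK: "\<forall>i\<in>F. i \<ge> K"
    proof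
      fix i assume "i \<in> F"
      show "i \<ge> K"
      proof (rule ccontr)
        assume "\<not> K \<le> i"
        then have "b i \<le> N" unfolding N_def by (intro Max_ge) auto
        with F \<open>i\<in>F\<close> show False by auto
      qed
    qed
    have inj: "inj_on (\<lambda>i. i - K) F"
    proof (rule inj_onI)
      fix x y assume "x \<in> F" "y \<in> F" "x - K = y - K"
      then show "x = y" using FK by (metis le_add_diff_inverse2)
    qed
    have "(\<Sum>i\<in>F. ?f i) = (\<Sum>i\<in>(\<lambda>i. i - K) ` F. ?f (i + K))"
      by (subst sum.reindex[OF inj]) (use FK in \<open>auto intro!: sum.cong\<close>)
    also have "\<dots> \<le> (\<Sum>i. ?f (i + K))"
      by (rule sum_le_suminf[OF sK]) (use F in auto)
    also have "\<dots> < e" using K by simp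
    finally show "(\<Sum>i\<in>F. ?f i) < e" .
  qed
qed

lemma count_dvd:
  fixes d P :: int and bb M :: nat
  assumes "coprime P (int bb)" "bb > 0"
  shows "card {s\<in>{1..M}. int bb dvd d + P * int s} \<le> M div bb + 1"
proof -
  let ?S = "{s\<in>{1..M}. int bb dvd d + P * int s}"
  have "inj_on (\<lambda>s. s div bb) ?S"
  proof (rule inj_onI)
    fix s s' assume s: "s \<in> ?S" and s': "s' \<in> ?S" and eq: "s div bb = s' div bb"
    have "int bb dvd (d + P * int s) - (d + P * int s')" using s s' by (intro dvd_diff) auto
    then have "int bb dvd P * (int s - int s')" by (simp add: algebra_simps)
    then have "int bb dvd int s - int s'"
      using assms(1) coprime_dvd_mult_right_iff coprime_commute by blast
    moreover have "\<bar>int s - int s'\<bar> < int bb"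
    proof -
      have "s = bb * (s' div bb) + s mod bb" using eq by (metis div_mult_mod_eq mult.commute)
      moreover have "s' = bb * (s' div bb) + s' mod bb" by simp
      moreover have "s mod bb < bb" "s' mod bb < bb" using assms(2) by simp_all
      ultimately show ?thesis using eq by linarith
    qed
    ultimately have "int s - int s' = 0"
    proof -
      assume a: "int bb dvd int s - int s'" "\<bar>int s - int s'\<bar> < int bb"
      show ?thesis
      proof (rule ccontr)
        assume "int s - int s' \<noteq> 0"
        from dvd_imp_le_int[OF this a(1)] a(2) show False by simp
      qed
    qed
    then show "s = s'" by simp
  qed
  moreover have "(\<lambda>s. s div bb) ` ?S \<subseteq> {0..M div bb}"
    by (auto intro: div_le_mono)
  ultimately have "card ?S \<le> card {0..M div bb}"
    by (intro card_inj_on_le) auto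
  then show ?thesis by simp
qed

lemma count_dvd_nat:
  fixes d P bb M :: nat
  assumes "coprime P bb" "bb > 0"
  shows "card {s\<in>{1..M}. bb dvd d + P * s} \<le> M div bb + 1"
proof -
  have e: "(int bb dvd int d + int P * int s) = (bb dvd d + P * s)" for s
    by (subst of_nat_mult[symmetric], subst of_nat_add[symmetric], rule int_dvd_int_iff)
  have "{s\<in>{1..M}. bb dvd d + P * s} = {s\<in>{1..M}. int bb dvd int d + int P * int s}"
    by (simp only: e)
  also have "card \<dots> \<le> M div bb + 1"
    by (rule count_dvd) (use assms in auto)
  finally show ?thesis .
qed



lemma phi_in_X_eta:
  assumes b_ge: "\<And>i. b i \<ge> 2"
    and b_coprime: "\<And>i j. i \<noteq> j \<Longrightarrow> coprime (b i) (b j)"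
    and b_summable: "summable (\<lambda>i. 1 / real (b i))"
  shows "phi b \<omega> \<in> X_eta b"
  unfolding X_eta_def
proof (intro CollectI allI)
  fix a :: int and L :: nat
  have inj: "inj b" by (rule b_inj[OF b_ge b_coprime])
  have bpos: "b i > 0" for i using b_ge[of i] by simp
  define Z where "Z = {j. j < L \<and> \<not> phi b \<omega> (a + int j)}"
  define wit where "wit j = (SOME i. (\<omega> i + (a + int j)) mod int (b i) = 0)" for j
  have wit: "(\<omega> (wit j) + (a + int j)) mod int (b (wit j)) = 0" if "j \<in> Z" for j
  proof -
    have "\<exists>i. (\<omega> i + (a + int j)) mod int (b i) = 0" using that unfolding Z_def phi_def by auto
    then show ?thesis unfolding wit_def by (rule someI_ex)
  qed
  have LL: "(0::real) < 1 / (4 * (real L + 1))" by simp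
  obtain N1 where N1: "\<And>F. finite F \<Longrightarrow> (\<forall>i\<in>F. b i > N1) \<Longrightarrow> (\<Sum>i\<in>F. 1 / real (b i)) < 1 / (4 * (real L + 1))"
    using tail_small[OF inj b_summable LL] by blast
  define I where "I = {i. b i \<le> N1} \<union> wit ` Z"
  have finI: "finite I" unfolding I_def Z_def using finite_b_le[OF inj] by auto
  define P where "P = (\<Prod>i\<in>I. b i)"
  have Ppos: "P > 0" unfolding P_def using bpos by (simp add: prod_pos)
  have LP: "(0::real) < 1 / (8 * (real L + 1) * real P)" using Ppos by simp
  obtain N2 where N2: "\<And>F. finite F \<Longrightarrow> (\<forall>i\<in>F. b i > N2) \<Longrightarrow> (\<Sum>i\<in>F. 1 / real (b i)) < 1 / (8 * (real L + 1) * real P)"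
    using tail_small[OF inj b_summable LP] by blast
  define M where "M = max N2 (L + 1)"
  have M1: "M \<ge> L + 1" "M \<ge> N2" unfolding M_def by auto
  obtain x where x: "\<forall>i\<in>I. [x = nat ((\<omega> i + a) mod int (b i))] (mod b i)"
    using chinese_remainder_nat[OF finI, of b "\<lambda>i. nat ((\<omega> i + a) mod int (b i))"] b_coprime by presburger
  define c where "c = x mod P"
  have cP: "c < P" unfolding c_def using Ppos by simp
  have key: "(int (b i) dvd int (c + P * s + j)) \<longleftrightarrow> (\<omega> i + (a + int j)) mod int (b i) = 0"
    if "i \<in> I" for i s j
  proof -
    have dP: "b i dvd P" unfolding P_def using finI that by (rule dvd_prodI)
    have "c mod b i = x mod b i" unfolding c_def by (rule mod_mod_cancel[OF dP])
    also have "\<dots> = nat ((\<omega> i + a) mod int (b i)) mod b i" using x that by (simp add: cong_def)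
    finally have cm: "c mod b i = nat ((\<omega> i + a) mod int (b i)) mod b i" .
    define r where "r = (\<omega> i + a) mod int (b i)"
    have r0: "0 \<le> r" "r < int (b i)" unfolding r_def using bpos[of i] by simp_all
    then have "nat r < b i" by simp
    then have "nat r mod b i = nat r" by simp
    with cm have "c mod b i = nat r" unfolding r_def by simp
    then have "int (c mod b i) = r" using r0 by simp
    then have "int c mod int (b i) = (\<omega> i + a) mod int (b i)" unfolding r_def by (simp add: of_nat_mod)
    then have d1: "int (b i) dvd int c - (\<omega> i + a)" by (simp add: mod_eq_dvd_iff)
    have d2: "int (b i) dvd int P * int s" using dP by simp
    have "int (b i) dvd int (c + P * s + j) - (\<omega> i + (a + int j))"
    proof -
      have eq: "int (c + P * s + j) - (\<omega> i + (a + int j)) = (int c - (\<omega> i + a)) + int P * int s" by simp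
      show ?thesis unfolding eq by (rule dvd_add[OF d1 d2])
    qed
    then have "int (c + P * s + j) mod int (b i) = (\<omega> i + (a + int j)) mod int (b i)"
      by (simp add: mod_eq_dvd_iff)
    then show ?thesis by (simp add: dvd_eq_mod_eq_0)
  qed
  define X where "X = c + P * M + L"
  have X2: "X \<le> 3 * (P * M)"
  proof -
    have h1: "P \<le> P * M" using M1 by simp
    have h2: "M \<le> P * M" using Ppos by simp
    show ?thesis unfolding X_def using cP M1 h1 h2 by linarith
  qed
  define G where "G = {i. i \<notin> I \<and> b i \<le> X}"
  have finG: "finite G" unfolding G_def using finite_b_le[OF inj, of X] by (auto elim: finite_subset[rotated])
  define B where "B = {s\<in>{1..M}. \<exists>j<L. \<exists>i. i \<notin> I \<and> b i dvd c + P * s + j}"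
  have Bsub: "B \<subseteq> (\<Union>j\<in>{..<L}. \<Union>i\<in>G. {s\<in>{1..M}. b i dvd (c + j) + P * s})"
  proof
    fix s assume "s \<in> B"
    then obtain j i where s: "s \<in> {1..M}" "j < L" "i \<notin> I" "b i dvd c + P * s + j" unfolding B_def by blast
    have pos: "c + P * s + j > 0" using s(1) Ppos by simp
    have "b i \<le> c + P * s + j" by (rule dvd_imp_le[OF s(4) pos])
    also have "\<dots> \<le> X"
    proof -
      have "P * s \<le> P * M" using s(1) by simp
      then show ?thesis unfolding X_def using s(2) by linarith
    qed
    finally have "i \<in> G" unfolding G_def using s(3) by simp
    then show "s \<in> (\<Union>j\<in>{..<L}. \<Union>i\<in>G. {s\<in>{1..M}. b i dvd (c + j) + P * s})"
    proof -
      have "s \<in> {s\<in>{1..M}. b i dvd (c + j) + P * s}" using s(1,4) by (simp add: ac_simps)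
      then show ?thesis using \<open>i \<in> G\<close> s(2) by blast
    qed
  qed
  have cop: "coprime P (b i)" if "i \<notin> I" for i
    unfolding P_def using that finI
    by (intro prod_coprime_left b_coprime) auto
  have termb: "card {s\<in>{1..M}. b i dvd (c + j) + P * s} \<le> M div b i + 1" if "i \<in> G" for i j
    by (rule count_dvd_nat) (use that cop bpos in \<open>auto simp: G_def\<close>)
  have "card B \<le> card (\<Union>j\<in>{..<L}. \<Union>i\<in>G. {s\<in>{1..M}. b i dvd (c + j) + P * s})"
    by (rule card_mono[OF _ Bsub]) (rule finite_subset[of _ "{1..M}"], auto)
  also have "\<dots> \<le> (\<Sum>j\<in>{..<L}. card (\<Union>i\<in>G. {s\<in>{1..M}. b i dvd (c + j) + P * s}))"
    by (rule card_UN_le) auto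
  also have "\<dots> \<le> (\<Sum>j\<in>{..<L}. \<Sum>i\<in>G. card {s\<in>{1..M}. b i dvd (c + j) + P * s})"
    by (intro sum_mono card_UN_le finG)
  also have "\<dots> \<le> (\<Sum>j\<in>{..<L}. \<Sum>i\<in>G. (M div b i + 1))"
    by (intro sum_mono termb)
  also have "\<dots> = L * (\<Sum>i\<in>G. (M div b i + 1))" by simp
  finally have cardB: "card B \<le> L * (\<Sum>i\<in>G. (M div b i + 1))" .
  have termR: "real (M div b i + 1) \<le> 2 * real M * (1 / real (b i))
      + 3 * real P * real M * (if b i > N2 then 1 / real (b i) else 0)" if "i \<in> G" for i
  proof (cases "b i \<le> M")
    case True
    have "real (M div b i) \<le> real M / real (b i)" by (rule of_nat_div_le_of_nat)
    moreover have "1 \<le> real M / real (b i)" using True bpos[of i] by simp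
    ultimately have "real (M div b i + 1) \<le> 2 * real M * (1 / real (b i))" by simp
    moreover have "0 \<le> 3 * real P * real M * (if b i > N2 then 1 / real (b i) else 0)" by simp
    ultimately show ?thesis by linarith
  next
    case False
    then have "M div b i = 0" by simp
    moreover have "b i > N2" using False M1 by simp
    moreover have "real (b i) \<le> 3 * real P * real M"
    proof -
      have "b i \<le> 3 * (P * M)" using that X2 unfolding G_def by simp
      then have "real (b i) \<le> real (3 * (P * M))" by (simp only: of_nat_le_iff)
      then show ?thesis by (simp add: mult.assoc)
    qed
    ultimately have "real (M div b i + 1) \<le> 3 * real P * real M * (if b i > N2 then 1 / real (b i) else 0)"
      using bpos[of i] by (simp add: field_simps)
    moreover have "0 \<le> 2 * real M * (1 / real (b i))" by simp
    ultimately show ?thesis by linarith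
  qed
  have S1: "(\<Sum>i\<in>G. 1 / real (b i)) < 1 / (4 * (real L + 1))"
    by (rule N1[OF finG]) (auto simp: G_def I_def)
  have "(\<Sum>i\<in>G. (if b i > N2 then 1 / real (b i) else 0)) = (\<Sum>i\<in>{i\<in>G. b i > N2}. 1 / real (b i))"
    using finG by (simp add: sum.inter_filter)
  also have "\<dots> < 1 / (8 * (real L + 1) * real P)"
    by (rule N2) (use finG in auto)
  finally have S2: "(\<Sum>i\<in>G. (if b i > N2 then 1 / real (b i) else 0)) < 1 / (8 * (real L + 1) * real P)" .
  have "real (\<Sum>i\<in>G. (M div b i + 1)) \<le> (\<Sum>i\<in>G. 2 * real M * (1 / real (b i))
      + 3 * real P * real M * (if b i > N2 then 1 / real (b i) else 0))"
    unfolding of_nat_sum by (intro sum_mono termR)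
  also have "\<dots> = 2 * real M * (\<Sum>i\<in>G. 1 / real (b i)) + 3 * real P * real M * (\<Sum>i\<in>G. (if b i > N2 then 1 / real (b i) else 0))"
    by (simp add: sum.distrib sum_distrib_left)
  also have "\<dots> \<le> 2 * real M * (1 / (4 * (real L + 1))) + 3 * real P * real M * (1 / (8 * (real L + 1) * real P))"
    using S1 S2 Ppos by (intro add_mono mult_left_mono) auto
  also have "\<dots> = 7 * real M / (8 * (real L + 1))"
  proof -
    have p: "real P \<noteq> 0" using Ppos by simp
    have "3 * real P * real M * (1 / (8 * (real L + 1) * real P)) = 3 * real M / (8 * (real L + 1))"
      using p by (simp add: divide_simps)
    moreover have "2 * real M * (1 / (4 * (real L + 1))) = 4 * real M / (8 * (real L + 1))"
      by (simp add: divide_simps)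
    ultimately show ?thesis by (simp add: add_divide_distrib[symmetric])
  qed
  also have "\<dots> \<le> real M / (real L + 1)" by (simp add: field_simps)
  finally have sumR: "real (\<Sum>i\<in>G. (M div b i + 1)) \<le> real M / (real L + 1)" .
  have "real (card B) \<le> real L * real (\<Sum>i\<in>G. (M div b i + 1))"
  proof -
    have "real (card B) \<le> real (L * (\<Sum>i\<in>G. (M div b i + 1)))" using cardB by (simp only: of_nat_le_iff)
    then show ?thesis by simp
  qed
  also have "\<dots> \<le> real L * (real M / (real L + 1))" by (intro mult_left_mono sumR) auto
  also have "\<dots> < real M" using M1 by (simp add: field_simps)
  finally have "card B < card {1..M}" by simp
  moreover have "B \<subseteq> {1..M}" unfolding B_def by auto
  ultimately have "\<not> {1..M} \<subseteq> B"
  proof -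
    assume a: "card B < card {1..M}" "B \<subseteq> {1..M}"
    show ?thesis
    proof
      assume "{1..M} \<subseteq> B"
      then have "card {1..M} \<le> card B" by (intro card_mono) (use a(2) finite_subset in auto)
      with a(1) show False by simp
    qed
  qed
  then obtain s where s: "s \<in> {1..M}" "s \<notin> B" by blast
  show "\<exists>t::int. \<forall>j<L. phi b \<omega> (a + int j) = eta b (t + int j)"
  proof (intro exI allI impI)
    fix j assume j: "j < L"
    have e: "eta b (int (c + P * s) + int j) = (\<forall>i. \<not> int (b i) dvd int (c + P * s + j))"
      unfolding eta_def by simp
    have nI: "\<not> int (b i) dvd int (c + P * s + j)" if "i \<notin> I" for i
    proof -
      have "\<not> b i dvd c + P * s + j" using s j that unfolding B_def by auto
      then show ?thesis using int_dvd_int_iff by blast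
    qed
    show "phi b \<omega> (a + int j) = eta b (int (c + P * s) + int j)"
    proof (cases "phi b \<omega> (a + int j)")
      case True
      then have "\<forall>i. (\<omega> i + (a + int j)) mod int (b i) \<noteq> 0" unfolding phi_def by simp
      then have "\<forall>i. \<not> int (b i) dvd int (c + P * s + j)" using key nI by blast
      with True e show ?thesis by simp
    next
      case False
      then have "j \<in> Z" using j unfolding Z_def by simp
      then have wI: "wit j \<in> I" unfolding I_def by simp
      have "int (b (wit j)) dvd int (c + P * s + j)"
        using key[OF wI, of s j] wit[OF \<open>j \<in> Z\<close>] by simp
      with False e show ?thesis by auto
    qed
  qed
qed




definition Pr :: "(nat \<Rightarrow> nat) \<Rightarrow> (int \<Rightarrow> bool) \<Rightarrow> nat \<Rightarrow> int \<Rightarrow> bool" where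
  "Pr b x i v \<longleftrightarrow> 0 \<le> v \<and> v < int (b i) \<and> (\<forall>m. x m \<longrightarrow> (m + v) mod int (b i) \<noteq> 0)"

definition theta :: "(nat \<Rightarrow> nat) \<Rightarrow> (int \<Rightarrow> bool) \<Rightarrow> nat \<Rightarrow> int" where
  "theta b x = (\<lambda>i. if \<exists>!v. Pr b x i v then THE v. Pr b x i v else 0)"

definition Yp :: "(nat \<Rightarrow> nat) \<Rightarrow> (int \<Rightarrow> bool) set" where
  "Yp b = {x. \<forall>i. \<exists>!v. Pr b x i v}"

definition rot :: "(nat \<Rightarrow> nat) \<Rightarrow> (nat \<Rightarrow> int) \<Rightarrow> (nat \<Rightarrow> int)" where
  "rot b \<omega> = (\<lambda>i. (\<omega> i + 1) mod int (b i))"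

lemma space_cfg[simp]: "space cfg_space = UNIV"
  by (simp add: cfg_space_def space_PiM)

lemma cfg_coord[measurable]: "(\<lambda>x. x n) \<in> measurable cfg_space (count_space UNIV)"
  unfolding cfg_space_def by (rule measurable_component_singleton) simp

lemma measurable_into_cfg:
  assumes "\<And>n. (\<lambda>\<omega>. f \<omega> n) \<in> measurable N (count_space UNIV)"
  shows "f \<in> measurable N cfg_space"
proof -
  have "(\<lambda>\<omega> n. f \<omega> n) \<in> measurable N cfg_space"
    unfolding cfg_space_def by (rule measurable_PiM_single') (use assms in auto)
  then show ?thesis by simp
qed

lemma shift_meas[measurable]: "shift \<in> measurable cfg_space cfg_space"
  by (rule measurable_into_cfg) (simp add: shift_def)

lemma space_haar[simp]: "space (haar_Omega b) = UNIV"
  by (simp add: haar_Omega_def space_PiM)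

lemma haar_coord[measurable]: "(\<lambda>\<omega>. \<omega> i) \<in> measurable (haar_Omega b) (count_space UNIV)"
proof -
  have "(\<lambda>\<omega>. \<omega> i) \<in> measurable (haar_Omega b) (measure_pmf (pmf_of_set {0..<int (b i)}))"
    unfolding haar_Omega_def by (rule measurable_component_singleton) simp
  then show ?thesis by (simp add: measurable_cong_sets[OF refl sets_measure_pmf_count_space])
qed

lemma phi_meas[measurable]: "phi b \<in> measurable (haar_Omega b) cfg_space"
  by (rule measurable_into_cfg) (simp add: phi_def)

lemma Pr_pred[measurable]: "Measurable.pred cfg_space (\<lambda>x. Pr b x i v)"
  unfolding Pr_def by measurable

lemma theta_coord_meas: "(\<lambda>x. theta b x i) \<in> measurable cfg_space (count_space UNIV)"
proof -
  have eq: "(theta b x i = w) = (((\<exists>v. Pr b x i v \<and> (\<forall>v'. Pr b x i v' \<longrightarrow> v' = v)) \<and> Pr b x i w)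
     \<or> (\<not> (\<exists>v. Pr b x i v \<and> (\<forall>v'. Pr b x i v' \<longrightarrow> v' = v)) \<and> w = 0))" for w x
    unfolding theta_def by (auto intro: the_equality) (metis the_equality)+
  show ?thesis
    unfolding measurable_count_space_eq2_countable
  proof (intro conjI ballI)
    fix w :: int
    have "Measurable.pred cfg_space (\<lambda>x. theta b x i = w)" unfolding eq by measurable
    then show "(\<lambda>x. theta b x i) -` {w} \<inter> space cfg_space \<in> sets cfg_space"
      by (simp add: pred_def vimage_def Collect_conv_if)
  qed auto
qed

lemma theta_meas[measurable]: "theta b \<in> measurable cfg_space (haar_Omega b)"
proof -
  have "(\<lambda>x i. theta b x i) \<in> measurable cfg_space (haar_Omega b)"
    unfolding haar_Omega_def
    by (rule measurable_PiM_single')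
       (auto simp: measurable_cong_sets[OF refl sets_measure_pmf_count_space] theta_coord_meas)
  then show ?thesis by simp
qed

lemma Yp_meas[measurable]: "Yp b \<in> sets cfg_space"
proof -
  have "Measurable.pred cfg_space (\<lambda>x. \<forall>i. \<exists>v. Pr b x i v \<and> (\<forall>v'. Pr b x i v' \<longrightarrow> v' = v))" by measurable
  then show ?thesis unfolding Yp_def Ex1_def by (simp add: pred_def)
qed

lemma Mmap_meas[measurable]: "Mmap \<in> measurable (cfg_space \<Otimes>\<^sub>M cfg_space) cfg_space"
  by (rule measurable_into_cfg) (simp add: Mmap_def)




lemma Pr_shift:
  assumes "b i > 0"
  shows "Pr b (shift x) i v \<longleftrightarrow> 0 \<le> v \<and> v < int (b i) \<and> Pr b x i ((v - 1) mod int (b i))"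
proof -
  let ?q = "int (b i)"
  have q: "?q > 0" using assms by simp
  have A: "(\<forall>m. shift x m \<longrightarrow> (m + v) mod ?q \<noteq> 0) \<longleftrightarrow> (\<forall>m. x m \<longrightarrow> (m + (v - 1)) mod ?q \<noteq> 0)"
  proof
    assume h: "\<forall>m. shift x m \<longrightarrow> (m + v) mod ?q \<noteq> 0"
    show "\<forall>m. x m \<longrightarrow> (m + (v - 1)) mod ?q \<noteq> 0"
    proof (intro allI impI)
      fix m assume "x m"
      then have "shift x (m - 1)" by (simp add: shift_def)
      from h[rule_format, OF this] have "(m - 1 + v) mod ?q \<noteq> 0" .
      then show "(m + (v - 1)) mod ?q \<noteq> 0" by (simp add: algebra_simps)
    qed
  next
    assume h: "\<forall>m. x m \<longrightarrow> (m + (v - 1)) mod ?q \<noteq> 0"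
    show "\<forall>m. shift x m \<longrightarrow> (m + v) mod ?q \<noteq> 0"
    proof (intro allI impI)
      fix m assume "shift x m"
      then have "x (m + 1)" by (simp add: shift_def)
      from h[rule_format, OF this] have "(m + 1 + (v - 1)) mod ?q \<noteq> 0" .
      then show "(m + v) mod ?q \<noteq> 0" by (simp add: algebra_simps)
    qed
  qed
  have B: "(m + (v - 1)) mod ?q = (m + (v - 1) mod ?q) mod ?q" for m by (simp add: mod_add_right_eq)
  show ?thesis unfolding Pr_def A B using q by simp
qed

lemma Pr_range: "Pr b x i v \<Longrightarrow> 0 \<le> v \<and> v < int (b i)" by (simp add: Pr_def)

lemma Pr_shift_back:
  assumes "b i > 0" "Pr b x i w"
  shows "Pr b (shift x) i ((w + 1) mod int (b i))"
proof -
  have w: "0 \<le> w" "w < int (b i)" using Pr_range[OF assms(2)] by auto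
  have "((w + 1) mod int (b i) - 1) mod int (b i) = w"
    using w by (metis add_diff_cancel_right' mod_diff_left_eq mod_pos_pos_trivial)
  then show ?thesis using assms w by (simp add: Pr_shift)
qed

lemma ex1_shift_theta:
  assumes "b i > 0" "\<exists>!v. Pr b x i v"
  shows "\<exists>!v. Pr b (shift x) i v" "theta b (shift x) i = (theta b x i + 1) mod int (b i)"
proof -
  let ?q = "int (b i)"
  obtain w0 where w0: "Pr b x i w0" "\<And>w. Pr b x i w \<Longrightarrow> w = w0" using assms(2) by blast
  have t0: "theta b x i = w0" unfolding theta_def using assms(2) by (simp add: the1_equality[OF assms(2) w0(1)])
  define v0 where "v0 = (w0 + 1) mod ?q"
  have v0: "Pr b (shift x) i v0" unfolding v0_def by (rule Pr_shift_back[of b i, OF assms(1) w0(1)])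
  have uniq: "v = v0" if "Pr b (shift x) i v" for v
  proof -
    have h: "0 \<le> v" "v < ?q" "Pr b x i ((v - 1) mod ?q)" using that Pr_shift[of b i, OF assms(1)] by auto
    then have "(v - 1) mod ?q = w0" using w0(2) by blast
    then have "((v - 1) mod ?q + 1) mod ?q = v0" unfolding v0_def by simp
    moreover have "((v - 1) mod ?q + 1) mod ?q = v"
      using h by (metis diff_add_cancel mod_add_left_eq mod_pos_pos_trivial)
    ultimately show ?thesis by simp
  qed
  show ex: "\<exists>!v. Pr b (shift x) i v" using v0 uniq by blast
  have "theta b (shift x) i = v0" unfolding theta_def using ex by (simp add: the1_equality[OF ex v0])
  then show "theta b (shift x) i = (theta b x i + 1) mod ?q" using t0 v0_def by simp
qed

lemma ex1_unshift:
  assumes "b i > 0" "\<exists>!v. Pr b (shift x) i v"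
  shows "\<exists>!v. Pr b x i v"
proof -
  let ?q = "int (b i)"
  obtain v0 where v0: "Pr b (shift x) i v0" "\<And>v. Pr b (shift x) i v \<Longrightarrow> v = v0" using assms(2) by blast
  define w0 where "w0 = (v0 - 1) mod ?q"
  have w0: "Pr b x i w0" using v0(1) Pr_shift[of b i, OF assms(1)] unfolding w0_def by auto
  have "w = w0" if "Pr b x i w" for w
  proof -
    have "(w + 1) mod ?q = v0" using v0(2) Pr_shift_back[of b i, OF assms(1) that] by blast
    then have "((w + 1) mod ?q - 1) mod ?q = w0" unfolding w0_def by simp
    moreover have "((w + 1) mod ?q - 1) mod ?q = w"
      using Pr_range[OF that] by (metis add_diff_cancel_right' mod_diff_left_eq mod_pos_pos_trivial)
    ultimately show ?thesis by simp
  qed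
  with w0 show ?thesis by blast
qed

lemma Yp_shift:
  assumes "\<And>i. b i > 0"
  shows "shift x \<in> Yp b \<longleftrightarrow> x \<in> Yp b"
  unfolding Yp_def mem_Collect_eq
proof
  assume h: "\<forall>i. \<exists>!v. Pr b (shift x) i v"
  show "\<forall>i. \<exists>!v. Pr b x i v"
  proof
    fix i show "\<exists>!v. Pr b x i v" by (rule ex1_unshift[of b i, OF assms spec[OF h]])
  qed
next
  assume h: "\<forall>i. \<exists>!v. Pr b x i v"
  show "\<forall>i. \<exists>!v. Pr b (shift x) i v"
  proof
    fix i show "\<exists>!v. Pr b (shift x) i v" by (rule ex1_shift_theta(1)[of b i, OF assms spec[OF h]])
  qed
qed

lemma theta_shift:
  assumes "\<And>i. b i > 0" "x \<in> Yp b"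
  shows "theta b (shift x) = rot b (theta b x)"
proof
  fix i
  have "\<exists>!v. Pr b x i v" using assms(2) unfolding Yp_def by simp
  then show "theta b (shift x) i = rot b (theta b x) i"
    unfolding rot_def by (rule ex1_shift_theta(2)[of b i, OF assms(1)])
qed

lemma theta_range:
  assumes "b i > 0" shows "0 \<le> theta b x i \<and> theta b x i < int (b i)"
proof (cases "\<exists>!v. Pr b x i v")
  case True
  then have "Pr b x i (theta b x i)" unfolding theta_def by (simp add: theI')
  then show ?thesis by (rule Pr_range)
next
  case False
  then show ?thesis using assms unfolding theta_def by simp
qed

lemma le_phi_theta:
  assumes "x \<in> Yp b" "x n"
  shows "phi b (theta b x) n"
proof -
  have "Pr b x i (theta b x i)" for i
    using assms(1) unfolding Yp_def theta_def by (simp add: theI')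
  then show ?thesis using assms(2) unfolding phi_def Pr_def by (simp add: add.commute)
qed

lemma phi_rot: "phi b (rot b \<omega>) = shift (phi b \<omega>)"
  unfolding phi_def rot_def shift_def by (simp add: mod_add_right_eq algebra_simps)

lemma Y_sub_Yp:
  assumes "\<And>i. b i > 0"
  shows "Y_set b \<subseteq> Yp b"
proof
  fix x assume x: "x \<in> Y_set b"
  show "x \<in> Yp b" unfolding Yp_def
  proof (intro CollectI allI)
    fix i
    let ?q = "int (b i)"
    have q: "?q > 0" using assms[of i] by simp
    define R where "R = (\<lambda>n. n mod ?q) ` supp x"
    have Rsub: "R \<subseteq> {0..<?q}" unfolding R_def using q by auto
    have cR: "card R = b i - 1" using x unfolding Y_set_def R_def by simp
    have "card ({0..<?q} - R) = card {0..<?q} - card R"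
      using Rsub by (intro card_Diff_subset) (auto intro: finite_subset)
    also have "\<dots> = 1" using cR assms[of i] by simp
    finally obtain r where r: "{0..<?q} - R = {r}" using card_1_singletonE by blast
    have Pr_iff: "Pr b x i v \<longleftrightarrow> 0 \<le> v \<and> v < ?q \<and> (- v) mod ?q \<notin> R" for v
    proof -
      have "(\<forall>m. x m \<longrightarrow> (m + v) mod ?q \<noteq> 0) \<longleftrightarrow> (- v) mod ?q \<notin> R"
      proof
        assume h: "\<forall>m. x m \<longrightarrow> (m + v) mod ?q \<noteq> 0"
        show "(- v) mod ?q \<notin> R"
        proof
          assume "(- v) mod ?q \<in> R"
          then obtain m where m: "x m" "m mod ?q = (- v) mod ?q" unfolding R_def supp_def by auto
          then have "?q dvd m - (- v)" by (simp add: mod_eq_dvd_iff)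
          then have "(m + v) mod ?q = 0" by simp
          with h[rule_format, OF m(1)] show False by simp
        qed
      next
        assume h: "(- v) mod ?q \<notin> R"
        show "\<forall>m. x m \<longrightarrow> (m + v) mod ?q \<noteq> 0"
        proof (intro allI impI notI)
          fix m assume m: "x m" "(m + v) mod ?q = 0"
          then have "?q dvd m - (- v)" by (simp add: dvd_eq_mod_eq_0)
          then have "m mod ?q = (- v) mod ?q" by (simp add: mod_eq_dvd_iff)
          then have "(- v) mod ?q \<in> R" using m(1) unfolding R_def supp_def by (metis image_eqI mem_Collect_eq)
          with h show False by blast
        qed
      qed
      then show ?thesis unfolding Pr_def by simp
    qed
    have rR: "r \<notin> R" "0 \<le> r" "r < ?q" using r by auto
    have inR: "u \<in> R" if "0 \<le> u" "u < ?q" "u \<noteq> r" for u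
    proof (rule ccontr)
      assume "u \<notin> R"
      then have "u \<in> {0..<?q} - R" using that(1,2) by simp
      then have "u \<in> {r}" by (subst r[symmetric])
      with that(3) show False by simp
    qed
    define v0 where "v0 = (- r) mod ?q"
    have v0: "Pr b x i v0"
    proof -
      have "(- v0) mod ?q = r" unfolding v0_def using rR
        by (metis add.inverse_inverse mod_minus_eq mod_pos_pos_trivial)
      then show ?thesis unfolding Pr_iff v0_def using q rR by simp
    qed
    have "v = v0" if "Pr b x i v" for v
    proof -
      have h: "0 \<le> v" "v < ?q" "(- v) mod ?q \<notin> R" using that Pr_iff by auto
      have "(- v) mod ?q = r" using inR[of "(- v) mod ?q"] h q by force
      then have "(- r) mod ?q = v mod ?q" by (metis add.inverse_inverse mod_minus_eq)
      then show ?thesis unfolding v0_def using h by simp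
    qed
    with v0 show "\<exists>!v. Pr b x i v" by blast
  qed
qed




declare theta_coord_meas[measurable]

lemma mod_step_iff:
  fixes t c q :: int
  assumes "0 \<le> t" "t < q" "0 \<le> c" "c < q"
  shows "(t + 1) mod q = c \<longleftrightarrow> t = (c - 1) mod q"
proof
  assume h: "(t + 1) mod q = c"
  have "t = (t + 1 - 1) mod q" using assms by simp
  also have "\<dots> = ((t + 1) mod q - 1) mod q" by (simp add: mod_diff_left_eq)
  finally show "t = (c - 1) mod q" using h by simp
next
  assume h: "t = (c - 1) mod q"
  have "(t + 1) mod q = ((c - 1) mod q + 1) mod q" using h by simp
  also have "\<dots> = (c - 1 + 1) mod q" by (simp add: mod_add_left_eq)
  finally show "(t + 1) mod q = c" using assms by simp
qed

locale setting =
  fixes b :: "nat \<Rightarrow> nat" and \<nu> :: "(int \<Rightarrow> bool) measure"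
  assumes b_ge: "\<And>i. b i \<ge> 2"
    and b_coprime: "\<And>i j. i \<noteq> j \<Longrightarrow> coprime (b i) (b j)"
    and prob: "prob_space \<nu>"
    and sets_nu: "sets \<nu> = sets cfg_space"
    and erg: "ergodic_meas \<nu> shift"
    and on_Y: "emeasure \<nu> (Y_set b) = 1"
begin

sublocale P: prob_space \<nu> by (rule prob)

lemma bpos: "b i > 0" using b_ge[of i] by simp

lemma space_nu[simp]: "space \<nu> = UNIV"
  using sets_eq_imp_space_eq[OF sets_nu] by simp

lemma meas_nu: "measurable \<nu> N = measurable cfg_space N"
  by (rule measurable_cong_sets[OF sets_nu refl])

lemma shift_inv: "distr \<nu> \<nu> shift = \<nu>"
  using erg unfolding ergodic_meas_def invariant_meas_def by simp

lemma Yp_nu: "Yp b \<in> sets \<nu>" using sets_nu Yp_meas by simp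

lemma AE_Yp: "AE x in \<nu>. x \<in> Yp b"
proof -
  have "emeasure \<nu> (Y_set b) \<le> emeasure \<nu> (Yp b)"
    by (rule emeasure_mono[OF Y_sub_Yp[of b, OF bpos] Yp_nu])
  then have "emeasure \<nu> (Yp b) = 1" using P.emeasure_le_1[of "Yp b"] on_Y by simp
  then have "P.prob (Yp b) = 1" by (simp add: measure_def)
  then show ?thesis by (rule P.AE_prob_1)
qed

lemma emeasure_Int_Yp: "A \<in> sets \<nu> \<Longrightarrow> emeasure \<nu> (A \<inter> Yp b) = emeasure \<nu> A"
  by (rule emeasure_eq_AE) (use AE_Yp Yp_nu in auto)

definition E :: "nat set \<Rightarrow> (nat \<Rightarrow> int) \<Rightarrow> (int \<Rightarrow> bool) set" where
  "E J c = {x. \<forall>j\<in>J. theta b x j = c j}"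

lemma E_sets: "E J c \<in> sets \<nu>"
proof -
  have "Measurable.pred cfg_space (\<lambda>x. \<forall>j\<in>J. theta b x j = c j)" by measurable
  then show ?thesis unfolding E_def using sets_nu by (simp add: pred_def)
qed

lemma E_step:
  assumes "\<forall>j\<in>J. 0 \<le> c j \<and> c j < int (b j)"
  shows "emeasure \<nu> (E J c) = emeasure \<nu> (E J (\<lambda>j. (c j - 1) mod int (b j)))"
proof -
  have sm: "shift \<in> measurable \<nu> \<nu>"
    using shift_meas by (simp add: meas_nu measurable_cong_sets[OF refl sets_nu])
  have "emeasure \<nu> (E J c) = emeasure (distr \<nu> \<nu> shift) (E J c)" by (simp add: shift_inv)
  also have "\<dots> = emeasure \<nu> (shift -` E J c)"
    using emeasure_distr[OF sm E_sets] by simp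
  also have "\<dots> = emeasure \<nu> (shift -` E J c \<inter> Yp b)"
    by (rule emeasure_Int_Yp[symmetric]) (use measurable_sets[OF sm E_sets] in simp)
  also have "shift -` E J c \<inter> Yp b = E J (\<lambda>j. (c j - 1) mod int (b j)) \<inter> Yp b"
  proof (intro set_eqI)
    fix x
    show "x \<in> shift -` E J c \<inter> Yp b \<longleftrightarrow> x \<in> E J (\<lambda>j. (c j - 1) mod int (b j)) \<inter> Yp b"
    proof (cases "x \<in> Yp b")
      case True
      then have ts: "theta b (shift x) j = (theta b x j + 1) mod int (b j)" for j
        using theta_shift[of b x, OF bpos] unfolding rot_def by simp
      have "theta b (shift x) j = c j \<longleftrightarrow> theta b x j = (c j - 1) mod int (b j)" if "j \<in> J" for j
        unfolding ts using mod_step_iff theta_range[of b j x, OF bpos] assms that by blast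
      then show ?thesis using True unfolding E_def by auto
    qed simp
  qed
  also have "emeasure \<nu> \<dots> = emeasure \<nu> (E J (\<lambda>j. (c j - 1) mod int (b j)))"
    by (rule emeasure_Int_Yp[OF E_sets])
  finally show ?thesis .
qed


lemma E_iter:
  assumes "\<forall>j\<in>J. 0 \<le> c j \<and> c j < int (b j)"
  shows "emeasure \<nu> (E J c) = emeasure \<nu> (E J (\<lambda>j. (c j - int m) mod int (b j)))"
proof (induction m)
  case 0
  have "E J c = E J (\<lambda>j. (c j - int 0) mod int (b j))" unfolding E_def using assms by auto
  then show ?case by simp
next
  case (Suc m)
  have r: "\<forall>j\<in>J. 0 \<le> (c j - int m) mod int (b j) \<and> (c j - int m) mod int (b j) < int (b j)"
    using bpos by simp
  have e: "((c j - int m) mod int (b j) - 1) mod int (b j) = (c j - int (Suc m)) mod int (b j)" for j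
    by (simp add: mod_diff_left_eq algebra_simps)
  show ?case using Suc E_step[OF r] unfolding e by simp
qed

lemma E_cong: "(\<And>j. j \<in> J \<Longrightarrow> c j = c' j) \<Longrightarrow> E J c = E J c'"
  unfolding E_def by auto

lemma E_equal:
  assumes "finite J" "\<forall>j\<in>J. 0 \<le> c j \<and> c j < int (b j)" "\<forall>j\<in>J. 0 \<le> c' j \<and> c' j < int (b j)"
  shows "emeasure \<nu> (E J c) = emeasure \<nu> (E J c')"
proof -
  have cop: "\<forall>i\<in>J. \<forall>j\<in>J. i \<noteq> j \<longrightarrow> coprime (b i) (b j)" using b_coprime by blast
  obtain m where m: "\<forall>j\<in>J. [m = nat ((c j - c' j) mod int (b j))] (mod b j)"
    using chinese_remainder_nat[OF assms(1) cop, of "\<lambda>j. nat ((c j - c' j) mod int (b j))"] by blast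
  have "(c j - int m) mod int (b j) = c' j" if "j \<in> J" for j
  proof -
    have "int m mod int (b j) = int (nat ((c j - c' j) mod int (b j))) mod int (b j)"
      using m that unfolding cong_def by (metis of_nat_mod)
    also have "\<dots> = (c j - c' j) mod int (b j)" using bpos[of j] by simp
    finally have "int (b j) dvd int m - (c j - c' j)" by (simp add: mod_eq_dvd_iff)
    then have "int (b j) dvd (c j - int m) - c' j"
      by (metis dvd_minus_iff minus_diff_eq diff_diff_eq2 diff_diff_eq add.commute)
    then have "(c j - int m) mod int (b j) = c' j mod int (b j)" by (simp add: mod_eq_dvd_iff)
    then show ?thesis using assms(3) that by simp
  qed
  then have "E J (\<lambda>j. (c j - int m) mod int (b j)) = E J c'" by (rule E_cong)
  then show ?thesis using E_iter[OF assms(2), of m] by simp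
qed

definition D :: "nat set \<Rightarrow> (nat \<Rightarrow> int) set" where
  "D J = (\<Pi>\<^sub>E j\<in>J. {0..<int (b j)})"

lemma E_restrict: "x \<in> E J (restrict (theta b x) J)"
  unfolding E_def by simp

lemma E_disj:
  assumes "c \<in> D J" "c' \<in> D J" "c \<noteq> c'"
  shows "E J c \<inter> E J c' = {}"
proof -
  obtain j where j: "j \<in> J" "c j \<noteq> c' j" using assms unfolding D_def
    by (metis PiE_ext)
  then show ?thesis unfolding E_def by auto
qed

lemma E_cover:
  "(\<Union>c\<in>D J. E J c) = UNIV"
proof -
  have "restrict (theta b x) J \<in> D J" for x
    unfolding D_def using theta_range[of b, OF bpos] by auto
  then show ?thesis using E_restrict by blast
qed

lemma card_D: "finite J \<Longrightarrow> card (D J) = (\<Prod>j\<in>J. b j)"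
  unfolding D_def by (simp add: card_PiE)

lemma finite_D: "finite J \<Longrightarrow> finite (D J)"
  unfolding D_def by (rule finite_PiE) auto

lemma E_point:
  assumes "finite J" "c \<in> D J"
  shows "emeasure \<nu> (E J c) = ennreal (1 / real (\<Prod>j\<in>J. b j))"
proof -
  have inD: "\<forall>j\<in>J. 0 \<le> c' j \<and> c' j < int (b j)" if "c' \<in> D J" for c'
    using that unfolding D_def by auto
  have "(\<Sum>c'\<in>D J. emeasure \<nu> (E J c')) = emeasure \<nu> (\<Union>c'\<in>D J. E J c')"
    by (rule sum_emeasure) (use E_sets E_disj finite_D[OF assms(1)] in \<open>auto simp: disjoint_family_on_def\<close>)
  also have "\<dots> = 1" unfolding E_cover using P.emeasure_space_1 by simp
  finally have s1: "(\<Sum>c'\<in>D J. emeasure \<nu> (E J c')) = 1" .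
  have "(\<Sum>c'\<in>D J. emeasure \<nu> (E J c')) = (\<Sum>c'\<in>D J. emeasure \<nu> (E J c))"
    by (rule sum.cong[OF refl]) (use E_equal[OF assms(1)] inD assms(2) in metis)
  also have "\<dots> = of_nat (card (D J)) * emeasure \<nu> (E J c)" by simp
  also have "\<dots> = ennreal (real (\<Prod>j\<in>J. b j) * P.prob (E J c))"
    by (simp add: card_D[OF assms(1)] P.emeasure_eq_measure ennreal_of_nat_eq_real_of_nat)
       (rule ennreal_mult[symmetric], auto intro: prod_nonneg)
  finally have "real (\<Prod>j\<in>J. b j) * P.prob (E J c) = 1" using s1 by simp
  moreover have "(\<Prod>j\<in>J. real (b j)) > 0" by (rule prod_pos) (use bpos in simp)
  ultimately have "P.prob (E J c) = 1 / real (\<Prod>j\<in>J. b j)"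
    by (simp add: field_simps)
  then show ?thesis by (simp add: P.emeasure_eq_measure)
qed

end



context setting begin

lemma emeasure_haar_emb:
  assumes "finite J"
  shows "emeasure (haar_Omega b) (prod_emb UNIV (\<lambda>i. measure_pmf (pmf_of_set {0..<int (b i)})) J (Pi\<^sub>E J A))
    = ennreal ((\<Prod>j\<in>J. real (card ({0..<int (b j)} \<inter> A j))) / real (\<Prod>j\<in>J. b j))"
proof -
  have ne: "{0..<int (b j)} \<noteq> {}" for j using bpos[of j] by simp
  have "emeasure (haar_Omega b) (prod_emb UNIV (\<lambda>i. measure_pmf (pmf_of_set {0..<int (b i)})) J (Pi\<^sub>E J A))
     = (\<Prod>j\<in>J. emeasure (measure_pmf (pmf_of_set {0..<int (b j)})) (A j))"
    unfolding haar_Omega_def by (rule emeasure_PiM_emb) (use assms in \<open>auto intro: prob_space_measure_pmf\<close>)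
  also have "\<dots> = (\<Prod>j\<in>J. ennreal (real (card ({0..<int (b j)} \<inter> A j)) / real (b j)))"
  proof (rule prod.cong[OF refl])
    fix j
    have "emeasure (measure_pmf (pmf_of_set {0..<int (b j)})) (A j)
        = ennreal (real (card ({0..<int (b j)} \<inter> A j)) / real (card {0..<int (b j)}))"
      by (rule emeasure_pmf_of_set[OF ne]) simp
    also have "\<dots> = ennreal (real (card ({0..<int (b j)} \<inter> A j)) / real (b j))"
      by simp
    finally show "emeasure (measure_pmf (pmf_of_set {0..<int (b j)})) (A j)
        = ennreal (real (card ({0..<int (b j)} \<inter> A j)) / real (b j))" .
  qed
  also have "\<dots> = ennreal (\<Prod>j\<in>J. real (card ({0..<int (b j)} \<inter> A j)) / real (b j))"
    by (rule prod_ennreal) simp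
  also have "(\<Prod>j\<in>J. real (card ({0..<int (b j)} \<inter> A j)) / real (b j))
      = (\<Prod>j\<in>J. real (card ({0..<int (b j)} \<inter> A j))) / real (\<Prod>j\<in>J. b j)"
    by (simp add: prod_dividef)
  finally show ?thesis .
qed

lemma emeasure_mu_emb:
  assumes "finite J"
  shows "emeasure (distr \<nu> (haar_Omega b) (theta b)) (prod_emb UNIV (\<lambda>i. measure_pmf (pmf_of_set {0..<int (b i)})) J (Pi\<^sub>E J A))
    = ennreal ((\<Prod>j\<in>J. real (card ({0..<int (b j)} \<inter> A j))) / real (\<Prod>j\<in>J. b j))"
proof -
  let ?M = "\<lambda>i. measure_pmf (pmf_of_set {0..<int (b i)})"
  let ?emb = "prod_emb UNIV ?M J (Pi\<^sub>E J A)"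
  define DA where "DA = (\<Pi>\<^sub>E j\<in>J. {0..<int (b j)} \<inter> A j)"
  have tm: "theta b \<in> measurable \<nu> (haar_Omega b)" using theta_meas by (simp add: meas_nu)
  have embs: "?emb \<in> sets (haar_Omega b)"
    unfolding haar_Omega_def by (rule sets_PiM_I) (use assms in auto)
  have "emeasure (distr \<nu> (haar_Omega b) (theta b)) ?emb = emeasure \<nu> (theta b -` ?emb \<inter> space \<nu>)"
    by (rule emeasure_distr[OF tm embs])
  also have "theta b -` ?emb \<inter> space \<nu> = (\<Union>c\<in>DA. E J c)"
  proof (intro set_eqI iffI)
    fix x assume "x \<in> theta b -` ?emb \<inter> space \<nu>"
    then have h: "\<forall>j\<in>J. theta b x j \<in> A j" by (auto simp: prod_emb_iff)
    have "restrict (theta b x) J \<in> DA" unfolding DA_def using h theta_range[of b, OF bpos] by auto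
    then show "x \<in> (\<Union>c\<in>DA. E J c)" using E_restrict by blast
  next
    fix x assume "x \<in> (\<Union>c\<in>DA. E J c)"
    then obtain c where c: "c \<in> DA" "x \<in> E J c" by blast
    then have "\<forall>j\<in>J. theta b x j \<in> A j" unfolding DA_def E_def by auto
    then show "x \<in> theta b -` ?emb \<inter> space \<nu>" by (auto simp: prod_emb_iff space_PiM)
  qed
  also have "emeasure \<nu> (\<Union>c\<in>DA. E J c) = (\<Sum>c\<in>DA. emeasure \<nu> (E J c))"
  proof (rule sum_emeasure[symmetric])
    show "(\<lambda>c. E J c) ` DA \<subseteq> sets \<nu>" using E_sets by auto
    show "disjoint_family_on (\<lambda>c. E J c) DA"
      unfolding disjoint_family_on_def by (intro ballI impI E_disj) (auto simp: DA_def D_def)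
    show "finite DA" unfolding DA_def using assms by (intro finite_PiE) auto
  qed
  also have "\<dots> = (\<Sum>c\<in>DA. ennreal (1 / real (\<Prod>j\<in>J. b j)))"
    by (rule sum.cong[OF refl], rule E_point[OF assms]) (auto simp: DA_def D_def)
  also have "\<dots> = of_nat (card DA) * ennreal (1 / real (\<Prod>j\<in>J. b j))" by simp
  also have "card DA = (\<Prod>j\<in>J. card ({0..<int (b j)} \<inter> A j))"
    unfolding DA_def using assms by (simp add: card_PiE)
  also have "of_nat (\<Prod>j\<in>J. card ({0..<int (b j)} \<inter> A j)) * ennreal (1 / real (\<Prod>j\<in>J. b j))
      = ennreal ((\<Prod>j\<in>J. real (card ({0..<int (b j)} \<inter> A j))) / real (\<Prod>j\<in>J. b j))"
    by (simp add: ennreal_of_nat_eq_real_of_nat, subst ennreal_mult[symmetric], auto intro: prod_nonneg)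
  finally show ?thesis .
qed

lemma mu_haar: "distr \<nu> (haar_Omega b) (theta b) = haar_Omega b"
proof -
  let ?M = "\<lambda>i. measure_pmf (pmf_of_set {0..<int (b i)})"
  have tm: "theta b \<in> measurable \<nu> (haar_Omega b)" using theta_meas by (simp add: meas_nu)
  show ?thesis
  proof (rule measure_eqI_PiM_infinite[where I=UNIV and M="?M"])
    show "sets (distr \<nu> (haar_Omega b) (theta b)) = sets (Pi\<^sub>M UNIV ?M)" by (simp add: haar_Omega_def)
    show "sets (haar_Omega b) = sets (Pi\<^sub>M UNIV ?M)" by (simp add: haar_Omega_def)
    show "finite_measure (distr \<nu> (haar_Omega b) (theta b))"
      using P.prob_space_distr[OF tm] by (simp add: prob_space_def)
  next
    fix A J assume J: "finite (J :: nat set)"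
    show "emeasure (distr \<nu> (haar_Omega b) (theta b)) (prod_emb UNIV ?M J (Pi\<^sub>E J A))
       = emeasure (haar_Omega b) (prod_emb UNIV ?M J (Pi\<^sub>E J A))"
      unfolding emeasure_mu_emb[OF J] emeasure_haar_emb[OF J] ..
  qed
qed

end



context setting begin

lemma main:
  assumes on_X: "emeasure \<nu> (X_eta b) = 1"
    and b_summable: "summable (\<lambda>i. 1 / real (b i))"
  shows "\<exists>\<rho>::((int \<Rightarrow> bool) \<times> (int \<Rightarrow> bool)) measure.
           prob_space \<rho> \<and> sets \<rho> = sets (cfg_space \<Otimes>\<^sub>M cfg_space)
           \<and> emeasure \<rho> (X_eta b \<times> UNIV) = 1
           \<and> ergodic_meas \<rho> (\<lambda>(x, u). (shift x, shift u))
           \<and> distr \<rho> cfg_space fst = mirsky b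
           \<and> distr \<rho> cfg_space Mmap = \<nu>"
proof -
  let ?C = cfg_space
  let ?T = "\<lambda>(x::int\<Rightarrow>bool, u::int\<Rightarrow>bool). (shift x, shift u)"
  define F where "F x = (phi b (theta b x), x)" for x
  have tm: "theta b \<in> measurable \<nu> (haar_Omega b)" using theta_meas by (simp add: meas_nu)
  have pt: "(\<lambda>x. phi b (theta b x)) \<in> measurable \<nu> ?C"
    by (rule measurable_compose[OF tm phi_meas])
  have idm: "(\<lambda>x. x) \<in> measurable \<nu> ?C" by (rule measurable_ident_sets[OF sets_nu])
  have Fm: "F \<in> measurable \<nu> (?C \<Otimes>\<^sub>M ?C)"
    unfolding F_def by (rule measurable_Pair[OF pt idm])
  define \<rho> where "\<rho> = distr \<nu> (?C \<Otimes>\<^sub>M ?C) F"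
  have ps: "prob_space \<rho>" unfolding \<rho>_def by (rule P.prob_space_distr[OF Fm])
  have sr: "sets \<rho> = sets (?C \<Otimes>\<^sub>M ?C)" unfolding \<rho>_def by simp
  have spr: "space \<rho> = UNIV" unfolding \<rho>_def by (simp add: space_pair_measure)
  have Fr: "F \<in> measurable \<nu> \<rho>" using Fm by (simp add: measurable_cong_sets[OF refl sr])
  have Xs: "X_eta b \<in> sets \<nu>" using on_X by (intro emeasure_neq_0_sets) simp
  have XC: "X_eta b \<times> UNIV \<in> sets (?C \<Otimes>\<^sub>M ?C)"
    using Xs sets_nu pair_measureI[of "X_eta b" ?C UNIV ?C] sets.top[of ?C] by simp
  have "emeasure \<rho> (X_eta b \<times> UNIV) = emeasure \<nu> (F -` (X_eta b \<times> UNIV) \<inter> space \<nu>)"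
    unfolding \<rho>_def by (rule emeasure_distr[OF Fm XC])
  also have "F -` (X_eta b \<times> UNIV) \<inter> space \<nu> = space \<nu>"
    using phi_in_X_eta[OF b_ge b_coprime b_summable] unfolding F_def by auto
  finally have supp1: "emeasure \<rho> (X_eta b \<times> UNIV) = 1" using P.emeasure_space_1 by simp
  have "distr \<rho> ?C fst = distr \<nu> ?C (fst \<circ> F)"
    unfolding \<rho>_def by (rule distr_distr[OF measurable_fst Fm])
  also have "fst \<circ> F = phi b \<circ> theta b" unfolding F_def by (simp add: comp_def)
  also have "distr \<nu> ?C (phi b \<circ> theta b) = distr (distr \<nu> (haar_Omega b) (theta b)) ?C (phi b)"
    by (rule distr_distr[OF phi_meas tm, symmetric])
  also have "\<dots> = mirsky b" unfolding mu_haar mirsky_def ..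
  finally have marg: "distr \<rho> ?C fst = mirsky b" .
  have "distr \<rho> ?C Mmap = distr \<nu> ?C (Mmap \<circ> F)"
    unfolding \<rho>_def by (rule distr_distr[OF Mmap_meas Fm])
  also have "\<dots> = distr \<nu> ?C (\<lambda>x. x)"
  proof (rule distr_cong_AE[OF refl refl])
    show "AE x in \<nu>. (Mmap \<circ> F) x = x"
      using AE_Yp by eventually_elim (auto simp: Mmap_def F_def le_phi_theta)
    show "Mmap \<circ> F \<in> measurable \<nu> ?C" by (rule measurable_comp[OF Fm Mmap_meas])
    show "(\<lambda>x. x) \<in> measurable \<nu> ?C" by (rule idm)
  qed
  also have "\<dots> = \<nu>" by (rule distr_id2[OF sets_nu[symmetric]])
  finally have mimg: "distr \<rho> ?C Mmap = \<nu>" .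
  have TC: "?T \<in> measurable (?C \<Otimes>\<^sub>M ?C) (?C \<Otimes>\<^sub>M ?C)" by measurable
  have Tr: "?T \<in> measurable \<rho> \<rho>"
    using TC by (simp add: measurable_cong_sets[OF sr sr])
  have sm: "shift \<in> measurable \<nu> \<nu>"
    using shift_meas by (simp add: meas_nu measurable_cong_sets[OF refl sets_nu])
  have TF: "?T (F x) = F (shift x)" if "x \<in> Yp b" for x
    unfolding F_def using theta_shift[of b x, OF bpos that] phi_rot by simp
  have "distr \<rho> \<rho> ?T = distr \<nu> \<rho> (?T \<circ> F)"
    unfolding \<rho>_def by (rule distr_distr) (use Tr Fr in \<open>simp_all add: \<rho>_def\<close>)
  also have "\<dots> = distr \<nu> \<rho> (F \<circ> shift)"
  proof (rule distr_cong_AE[OF refl refl])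
    show "AE x in \<nu>. (?T \<circ> F) x = (F \<circ> shift) x"
      using AE_Yp by eventually_elim (simp add: TF)
    show "?T \<circ> F \<in> measurable \<nu> \<rho>" by (rule measurable_comp[OF Fr Tr])
    show "F \<circ> shift \<in> measurable \<nu> \<rho>" by (rule measurable_comp[OF sm Fr])
  qed
  also have "\<dots> = distr (distr \<nu> \<nu> shift) \<rho> F" by (rule distr_distr[OF Fr sm, symmetric])
  also have "\<dots> = distr \<nu> \<rho> F" by (simp add: shift_inv)
  also have "\<dots> = \<rho>" unfolding \<rho>_def by (rule distr_cong) (simp_all add: sr[unfolded \<rho>_def])
  finally have inv: "distr \<rho> \<rho> ?T = \<rho>" .
  have erg_sets: "emeasure \<rho> A = 0 \<or> emeasure \<rho> A = 1"
    if A: "A \<in> sets \<rho>" "?T -` A \<inter> space \<rho> = A" for A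
  proof -
    have AC: "A \<in> sets (?C \<Otimes>\<^sub>M ?C)" using A(1) sr by simp
    define B where "B = F -` A \<inter> Yp b"
    have FA: "F -` A \<in> sets \<nu>" using measurable_sets[OF Fm AC] by simp
    have Bs: "B \<in> sets \<nu>" unfolding B_def using FA Yp_nu by blast
    have TA: "?T y \<in> A \<longleftrightarrow> y \<in> A" for y using A(2) spr by blast
    have "shift -` B \<inter> space \<nu> = B"
    proof (intro set_eqI)
      fix x
      show "x \<in> shift -` B \<inter> space \<nu> \<longleftrightarrow> x \<in> B"
      proof (cases "x \<in> Yp b")
        case True
        then have "shift x \<in> Yp b" using Yp_shift[of b x, OF bpos] by simp
        then show ?thesis using True TF[OF True] TA[of "F x"] unfolding B_def by auto
      next
        case False
        then have "shift x \<notin> Yp b" using Yp_shift[of b x, OF bpos] by simp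
        then show ?thesis using False unfolding B_def by auto
      qed
    qed
    then have "emeasure \<nu> B = 0 \<or> emeasure \<nu> B = 1"
      using erg Bs unfolding ergodic_meas_def by blast
    moreover have "emeasure \<rho> A = emeasure \<nu> B"
    proof -
      have "emeasure \<rho> A = emeasure \<nu> (F -` A \<inter> space \<nu>)" unfolding \<rho>_def by (rule emeasure_distr[OF Fm AC])
      also have "\<dots> = emeasure \<nu> (F -` A)" by simp
      also have "\<dots> = emeasure \<nu> B" unfolding B_def by (rule emeasure_Int_Yp[OF FA, symmetric])
      finally show ?thesis .
    qed
    ultimately show ?thesis by simp
  qed
  have ergr: "ergodic_meas \<rho> ?T"
    unfolding ergodic_meas_def invariant_meas_def using Tr inv erg_sets by blast
  show ?thesis using ps sr supp1 ergr marg mimg by blast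
qed

end

theorem mainTheorem3:
  fixes b :: "nat \<Rightarrow> nat" and \<nu> :: "(int \<Rightarrow> bool) measure"
  assumes b_ge: "\<And>i. b i \<ge> 2"
    and b_coprime: "\<And>i j. i \<noteq> j \<Longrightarrow> coprime (b i) (b j)"
    and b_summable: "summable (\<lambda>i. 1 / real (b i))"
    and prob: "prob_space \<nu>"
    and sets_nu: "sets \<nu> = sets cfg_space"
    and erg: "ergodic_meas \<nu> shift"
    and on_X: "emeasure \<nu> (X_eta b) = 1"
    and on_Y: "emeasure \<nu> (Y_set b) = 1"
  shows "\<exists>\<rho>::((int \<Rightarrow> bool) \<times> (int \<Rightarrow> bool)) measure.
           prob_space \<rho> \<and> sets \<rho> = sets (cfg_space \<Otimes>\<^sub>M cfg_space)
           \<and> emeasure \<rho> (X_eta b \<times> UNIV) = 1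
           \<and> ergodic_meas \<rho> (\<lambda>(x, u). (shift x, shift u))
           \<and> distr \<rho> cfg_space fst = mirsky b
           \<and> distr \<rho> cfg_space Mmap = \<nu>"
proof -
  interpret S: setting b \<nu> by (rule setting.intro[OF b_ge b_coprime prob sets_nu erg on_Y])
  show ?thesis by (rule S.main[OF on_X b_summable])
qed

end
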